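(* Let $n\ge1$, let $a_1,\dots,a_n\in\mathbb{C}$ be distinct, let $m_1,\dots,m_n\ge1$ be integers, let $c_0,b_k^{(j)}\in\mathbb{C}$, and let $$r(\lambda)=\lambda-c_0-\sum_{j=1}^n\sum_{k=1}^{m_j}\frac{b_k^{(j)}}{(\lambda-a_j)^k}.$$ If $\lambda_0$ is a zero of $r$, then $$|\lambda_0|\le\max_{1\le j\le n}\Big\{|a_j|+\cos\Big(\frac{\pi}{m_j+1}\Big),\ |c_0|\Big\}+\frac12\left(\sqrt{\sum_{j=1}^n m_j}+\sqrt{\sum_{j=1}^n\sum_{k=1}^{m_j}|b_k^{(j)}|^2}\right).$$
   Context: A zero of $r$ is a $\lambda_0\in\mathbb{C}\setminus\{a_1,\dots,a_n\}$ with $r(\lambda_0)=0$. *)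

theory Defs
  imports "HOL-Analysis.Analysis"
begin

text \<open>The rational function r, with poles a j (j < n) of orders m j and
  coefficients b j k (1 \<le> k \<le> m j); indices are 0-based in j.\<close>
definition rfun :: "nat \<Rightarrow> complex \<Rightarrow> (nat \<Rightarrow> complex) \<Rightarrow> (nat \<Rightarrow> nat) \<Rightarrow>
    (nat \<Rightarrow> nat \<Rightarrow> complex) \<Rightarrow> complex \<Rightarrow> complex" where
  "rfun n c0 a m b z = z - c0 - (\<Sum>j<n. \<Sum>k=1..m j. b j k / (z - a j) ^ k)"

end

theory Submission imports Defs begin

lemma cs_sqrt:
  fixes f g :: "'a \<Rightarrow> real"
  shows "(\<Sum>i\<in>I. f i * g i) \<le> sqrt (\<Sum>i\<in>I. (f i)\<^sup>2) * sqrt (\<Sum>i\<in>I. (g i)\<^sup>2)"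
proof -
  have "(\<Sum>i\<in>I. f i * g i) \<le> sqrt ((\<Sum>i\<in>I. f i * g i)\<^sup>2)" by simp
  also have "\<dots> \<le> sqrt ((\<Sum>i\<in>I. (f i)\<^sup>2) * (\<Sum>i\<in>I. (g i)\<^sup>2))"
    using Cauchy_Schwarz_ineq_sum real_sqrt_le_mono by blast
  finally show ?thesis by (simp add: real_sqrt_mult)
qed

lemma shift_sum:
  fixes g :: "nat \<Rightarrow> real"
  assumes "m \<ge> 1"
  shows "(\<Sum>k=2..m. g (k - 1)) + g m = (\<Sum>k=1..m. g k)"
  using assms
proof (induction m rule: nat_induct_at_least)
  case base then show ?case by simp
next
  case (Suc m)
  have "(\<Sum>k=2..Suc m. g (k - 1)) = (\<Sum>k=2..m. g (k - 1)) + g m"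
    using Suc.hyps by (simp add: sum.cl_ivl_Suc)
  then show ?case using Suc by (simp add: sum.cl_ivl_Suc)
qed

lemma jordan:
  fixes w :: "nat \<Rightarrow> real"
  assumes m: "m \<ge> 1"
  shows "(\<Sum>k=2..m. w (k - 1) * w k) \<le> cos (pi / (real m + 1)) * (\<Sum>k=1..m. (w k)\<^sup>2)"
proof -
  define th where "th = pi / (real m + 1)"
  define s where "s k = sin (real k * th)" for k :: nat
  have th_pos: "th > 0" unfolding th_def by simp
  have spos: "s k > 0" if "1 \<le> k" "k \<le> m" for k
  proof -
    have "real k * th > 0" using that th_pos by simp
    moreover have "real k * th < pi"
    proof -
      have "real k < real m + 1" using that by simp
      then have "real k * th < (real m + 1) * th" using th_pos by simp
      also have "\<dots> = pi" unfolding th_def by simp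
      finally show ?thesis .
    qed
    ultimately show ?thesis unfolding s_def by (rule sin_gt_zero)
  qed
  have s0: "s 0 = 0" unfolding s_def by simp
  have sm: "s (Suc m) = 0"
  proof -
    have "real (Suc m) * th = pi" unfolding th_def by (simp add: add.commute)
    then show ?thesis unfolding s_def by simp
  qed
  have rec: "s (k - 1) + s (Suc k) = 2 * cos th * s k" if "k \<ge> 1" for k
  proof -
    have "s (k - 1) = sin (real k * th - th)" unfolding s_def using that
      by (simp add: of_nat_diff algebra_simps)
    moreover have "s (Suc k) = sin (real k * th + th)" unfolding s_def
      by (simp add: algebra_simps)
    ultimately show ?thesis unfolding s_def by (simp add: sin_add sin_diff)
  qed
  define r where "r k = s (Suc k) / s k" for k
  define q where "q k = s (k - 1) / s k" for k
  have amgm: "2 * x * y \<le> p * x\<^sup>2 + y\<^sup>2 / p" if "p > 0" for p x y :: real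
  proof -
    have "0 \<le> (p * x - y)\<^sup>2 / p" using that by simp
    also have "\<dots> = p * x\<^sup>2 + y\<^sup>2 / p - 2 * x * y" using that
      by (simp add: power2_eq_square field_simps)
    finally show ?thesis by simp
  qed
  have step: "2 * (w (k - 1) * w k) \<le> r (k - 1) * (w (k - 1))\<^sup>2 + q k * (w k)\<^sup>2"
    if "k \<in> {2..m}" for k
  proof -
    have k: "2 \<le> k" "k \<le> m" using that by auto
    have p1: "s (k - 1) > 0" using spos k by simp
    have p2: "s k > 0" using spos k by simp
    have "r (k - 1) > 0" unfolding r_def using p1 p2 k by (simp add: Suc_diff_Suc)
    then have "2 * w (k - 1) * w k \<le> r (k - 1) * (w (k - 1))\<^sup>2 + (w k)\<^sup>2 / r (k - 1)"
      by (rule amgm)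
    moreover have "(w k)\<^sup>2 / r (k - 1) = q k * (w k)\<^sup>2"
      unfolding r_def q_def using k p1 p2 by (simp add: Suc_diff_Suc)
    ultimately show ?thesis by simp
  qed
  have "2 * (\<Sum>k=2..m. w (k - 1) * w k) \<le> (\<Sum>k=2..m. r (k - 1) * (w (k - 1))\<^sup>2 + q k * (w k)\<^sup>2)"
    unfolding sum_distrib_left by (rule sum_mono) (rule step)
  also have "\<dots> = (\<Sum>k=2..m. r (k - 1) * (w (k - 1))\<^sup>2) + (\<Sum>k=2..m. q k * (w k)\<^sup>2)"
    by (rule sum.distrib)
  also have "(\<Sum>k=2..m. r (k - 1) * (w (k - 1))\<^sup>2) = (\<Sum>k=1..m. r k * (w k)\<^sup>2)"
  proof -
    have "r m = 0" unfolding r_def using sm by simp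
    then show ?thesis using shift_sum[OF m, of "\<lambda>k. r k * (w k)\<^sup>2"] by simp
  qed
  also have "(\<Sum>k=2..m. q k * (w k)\<^sup>2) = (\<Sum>k=1..m. q k * (w k)\<^sup>2)"
  proof -
    have "q 1 = 0" unfolding q_def using s0 by simp
    moreover have "{1..m} = insert 1 {2..m}" using m by auto
    ultimately show ?thesis by simp
  qed
  also have "(\<Sum>k=1..m. r k * (w k)\<^sup>2) + (\<Sum>k=1..m. q k * (w k)\<^sup>2)
      = (\<Sum>k=1..m. 2 * cos th * (w k)\<^sup>2)"
    unfolding sum.distrib[symmetric]
  proof (rule sum.cong)
    fix k assume "k \<in> {1..m}"
    then have k: "1 \<le> k" "k \<le> m" by auto
    have "r k + q k = 2 * cos th" unfolding r_def q_def
      using rec[OF k(1)] spos[OF k] by (simp add: field_simps)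
    then show "r k * (w k)\<^sup>2 + q k * (w k)\<^sup>2 = 2 * cos th * (w k)\<^sup>2"
      by (metis distrib_right)
  qed simp
  finally have fin: "2 * (\<Sum>k=2..m. w (k - 1) * w k) \<le> (\<Sum>k=1..m. 2 * cos th * (w k)\<^sup>2)" .
  have "(\<Sum>k=1..m. 2 * cos th * (w k)\<^sup>2) = 2 * (cos th * (\<Sum>k=1..m. (w k)\<^sup>2))"
    by (simp add: sum_distrib_left mult.assoc)
  with fin show ?thesis unfolding th_def by linarith
qed

theorem theorem3p10:
  fixes n :: nat and a :: "nat \<Rightarrow> complex" and m :: "nat \<Rightarrow> nat"
    and c0 :: complex and b :: "nat \<Rightarrow> nat \<Rightarrow> complex" and l0 :: complex
  assumes "n \<ge> 1"
    and "inj_on a {..<n}"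
    and "\<And>j. j < n \<Longrightarrow> m j \<ge> 1"
    and "l0 \<notin> a ` {..<n}"
    and "rfun n c0 a m b l0 = 0"
  shows "norm l0 \<le> Max ((\<lambda>j. max (norm (a j) + cos (pi / (real (m j) + 1))) (norm c0)) ` {..<n})
      + (sqrt (real (\<Sum>j<n. m j)) + sqrt (\<Sum>j<n. \<Sum>k=1..m j. (norm (b j k))\<^sup>2)) / 2"
proof -
  note n1 = assms(1) and m1 = assms(3)
  define z where "z = l0"
  define u where "u j k = inverse (z - a j) ^ k" for j k
  define w where "w j k = norm (u j k)" for j k
  define Sj where "Sj j = (\<Sum>k=1..m j. (w j k)\<^sup>2)" for j
  define S where "S = (\<Sum>j<n. Sj j)"
  define B where "B = (\<Sum>j<n. \<Sum>k=1..m j. (norm (b j k))\<^sup>2)"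
  define N where "N = (\<Sum>j<n. m j)"
  define cj where "cj j = cos (pi / (real (m j) + 1))" for j
  define M where "M = Max ((\<lambda>j. max (norm (a j) + cj j) (norm c0)) ` {..<n})"
  have dnz: "z - a j \<noteq> 0" if "j < n" for j
    using assms(4) that unfolding z_def by auto
  have Sj_nn: "Sj j \<ge> 0" for j unfolding Sj_def by (simp add: sum_nonneg)
  have S_nn: "S \<ge> 0" unfolding S_def by (simp add: sum_nonneg Sj_nn)
  have B_nn: "B \<ge> 0" unfolding B_def by (simp add: sum_nonneg)
  have "0 \<in> {..<n}" using n1 by simp
  then have ne: "{..<n} \<noteq> {}" by blast
  have M_ge: "norm (a j) + cj j \<le> M" "norm c0 \<le> M" if "j < n" for j
    unfolding M_def using that ne by (auto simp: Max_ge_iff intro!: bexI[of _ j])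
  have M_c0: "norm c0 \<le> M" using M_ge(2)[of 0] n1 by simp
  have zu: "z * u j k = a j * u j k + u j (k - 1)" if "j < n" "k \<ge> 1" for j k
  proof -
    have "u j k = u j (k - 1) * inverse (z - a j)" unfolding u_def using that
      by (metis Suc_diff_1 less_le_trans zero_less_one power_Suc2)
    then have "(z - a j) * u j k = u j (k - 1)" using dnz[OF that(1)] by simp
    then show ?thesis by (simp add: algebra_simps)
  qed
  have uu: "u j k * cnj (u j k) = (of_real (w j k))\<^sup>2" for j k
    unfolding w_def by (simp add: complex_norm_square[symmetric])
  have zeq: "z = c0 + (\<Sum>j<n. \<Sum>k=1..m j. b j k * u j k)"
  proof -
    have "b j k / (z - a j) ^ k = b j k * u j k" for j k
      unfolding u_def by (simp add: divide_inverse power_inverse)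
    then have "l0 - c0 = (\<Sum>j<n. \<Sum>k=1..m j. b j k * u j k)"
      using assms(5) unfolding rfun_def z_def by simp
    then show ?thesis unfolding z_def by (metis add.commute diff_add_cancel)
  qed
  have blk: "z * of_real (Sj j) = a j * of_real (Sj j) + (\<Sum>k=1..m j. u j (k - 1) * cnj (u j k))"
    if "j < n" for j
  proof -
    have "z * of_real (Sj j) = (\<Sum>k=1..m j. (z * u j k) * cnj (u j k))"
      unfolding Sj_def by (simp add: sum_distrib_left uu[symmetric] mult.assoc)
    also have "\<dots> = (\<Sum>k=1..m j. a j * (u j k * cnj (u j k)) + u j (k - 1) * cnj (u j k))"
      by (rule sum.cong) (auto simp: zu[OF that] algebra_simps)
    also have "\<dots> = a j * of_real (Sj j) + (\<Sum>k=1..m j. u j (k - 1) * cnj (u j k))"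
      unfolding Sj_def by (simp add: sum.distrib sum_distrib_left uu)
    finally show ?thesis .
  qed
  have ident: "z * of_real (1 + S) = c0 + (\<Sum>j<n. \<Sum>k=1..m j. b j k * u j k)
      + (\<Sum>j<n. a j * of_real (Sj j) + (\<Sum>k=1..m j. u j (k - 1) * cnj (u j k)))"
  proof -
    have "z * of_real (1 + S) = z + (\<Sum>j<n. z * of_real (Sj j))"
      unfolding S_def by (simp add: distrib_left sum_distrib_left)
    also have "\<dots> = c0 + (\<Sum>j<n. \<Sum>k=1..m j. b j k * u j k)
      + (\<Sum>j<n. a j * of_real (Sj j) + (\<Sum>k=1..m j. u j (k - 1) * cnj (u j k)))"
      using blk zeq by (metis (no_types, lifting) lessThan_iff sum.cong)
    finally show ?thesis .
  qed
  have bnd1: "norm (\<Sum>j<n. \<Sum>k=1..m j. b j k * u j k) \<le> sqrt B * sqrt S"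
  proof -
    have "norm (\<Sum>j<n. \<Sum>k=1..m j. b j k * u j k) \<le> (\<Sum>j<n. \<Sum>k=1..m j. norm (b j k) * w j k)"
      unfolding w_def
      by (rule order_trans[OF norm_sum], rule sum_mono, rule order_trans[OF norm_sum])
         (simp add: norm_mult)
    also have "\<dots> = (\<Sum>(j,k)\<in>Sigma {..<n} (\<lambda>j. {1..m j}). norm (b j k) * w j k)"
      by (simp add: sum.Sigma)
    also have "\<dots> \<le> sqrt (\<Sum>(j,k)\<in>Sigma {..<n} (\<lambda>j. {1..m j}). (norm (b j k))\<^sup>2)
        * sqrt (\<Sum>(j,k)\<in>Sigma {..<n} (\<lambda>j. {1..m j}). (w j k)\<^sup>2)"
      using cs_sqrt[of "\<lambda>p. norm (b (fst p) (snd p))" "\<lambda>p. w (fst p) (snd p)"]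
      by (simp add: case_prod_beta)
    also have "\<dots> = sqrt B * sqrt S"
      unfolding B_def S_def Sj_def by (simp add: sum.Sigma)
    finally show ?thesis .
  qed
  have jb: "(\<Sum>k=1..m j. w j (k - 1) * w j k) \<le> w j 1 + cj j * Sj j" if "j < n" for j
  proof -
    have "(\<Sum>k=1..m j. w j (k - 1) * w j k) = w j 0 * w j 1 + (\<Sum>k=2..m j. w j (k - 1) * w j k)"
      using m1[OF that] by (simp add: sum.atLeast_Suc_atMost numeral_2_eq_2)
    moreover have "w j 0 = 1" unfolding w_def u_def by simp
    ultimately show ?thesis using jordan[OF m1[OF that], of "w j"] unfolding cj_def Sj_def by simp
  qed
  have bnd2: "(\<Sum>j<n. w j 1) \<le> sqrt N * sqrt S"
  proof -
    have "(\<Sum>j<n. w j 1) = (\<Sum>j<n. 1 * w j 1)" by simp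
    also have "\<dots> \<le> sqrt (\<Sum>j<n. 1\<^sup>2) * sqrt (\<Sum>j<n. (w j 1)\<^sup>2)" by (rule cs_sqrt)
    also have "\<dots> \<le> sqrt N * sqrt S"
    proof (rule mult_mono)
      have "(\<Sum>j<n. (1::nat)) \<le> (\<Sum>j<n. m j)" by (rule sum_mono) (use m1 in auto)
      then have "n \<le> N" unfolding N_def by simp
      then have "real n \<le> real N" by simp
      then show "sqrt (\<Sum>j<n. 1\<^sup>2) \<le> sqrt N" by simp
      have "(w j 1)\<^sup>2 \<le> Sj j" if "j < n" for j
      proof -
        have "{1..m j} = insert 1 {2..m j}" using m1[OF that] by auto
        then show ?thesis unfolding Sj_def by (simp add: sum_nonneg)
      qed
      then have "(\<Sum>j<n. (w j 1)\<^sup>2) \<le> S" unfolding S_def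
        by (intro sum_mono) auto
      then show "sqrt (\<Sum>j<n. (w j 1)\<^sup>2) \<le> sqrt S" by simp
    qed (auto simp: sum_nonneg)
    finally show ?thesis .
  qed
  have main: "norm z * (1 + S) \<le> norm c0 + sqrt B * sqrt S
      + (\<Sum>j<n. (norm (a j) + cj j) * Sj j + w j 1)"
  proof -
    have "norm (complex_of_real (1 + S)) = 1 + S" using S_nn by (simp only: norm_of_real abs_of_nonneg)
    then have "norm z * (1 + S) = norm (z * of_real (1 + S))" by (simp only: norm_mult)
    also have "\<dots> \<le> norm c0 + norm (\<Sum>j<n. \<Sum>k=1..m j. b j k * u j k)
      + norm (\<Sum>j<n. a j * of_real (Sj j) + (\<Sum>k=1..m j. u j (k - 1) * cnj (u j k)))"
      unfolding ident by (meson add_mono norm_triangle_ineq order_trans order_refl)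
    also have "norm (\<Sum>j<n. a j * of_real (Sj j) + (\<Sum>k=1..m j. u j (k - 1) * cnj (u j k)))
        \<le> (\<Sum>j<n. (norm (a j) + cj j) * Sj j + w j 1)"
    proof (rule order_trans[OF norm_sum], rule sum_mono)
      fix j assume j: "j \<in> {..<n}"
      have "norm (a j * of_real (Sj j) + (\<Sum>k=1..m j. u j (k - 1) * cnj (u j k)))
          \<le> norm (a j) * Sj j + (\<Sum>k=1..m j. w j (k - 1) * w j k)"
        by (rule order_trans[OF norm_triangle_ineq], rule add_mono)
           (auto simp: norm_mult Sj_nn w_def intro!: order_trans[OF norm_sum] sum_mono)
      also have "\<dots> \<le> norm (a j) * Sj j + (w j 1 + cj j * Sj j)" using jb j by simp
      finally show "norm (a j * of_real (Sj j) + (\<Sum>k=1..m j. u j (k - 1) * cnj (u j k)))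
          \<le> (norm (a j) + cj j) * Sj j + w j 1" by (simp add: algebra_simps)
    qed
    finally show ?thesis using bnd1 by linarith
  qed
  have "(\<Sum>j<n. (norm (a j) + cj j) * Sj j + w j 1) \<le> M * S + sqrt N * sqrt S"
  proof -
    have "(\<Sum>j<n. (norm (a j) + cj j) * Sj j) \<le> (\<Sum>j<n. M * Sj j)"
      by (rule sum_mono) (simp add: M_ge Sj_nn mult_right_mono)
    then show ?thesis using bnd2 unfolding S_def sum.distrib sum_distrib_left by linarith
  qed
  with main have "norm z * (1 + S) \<le> M * (1 + S) + (sqrt B + sqrt N) * sqrt S"
    using M_c0 by (simp add: algebra_simps)
  also have "(sqrt B + sqrt N) * sqrt S \<le> (sqrt B + sqrt N) * ((1 + S) / 2)"
  proof (rule mult_left_mono)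
    have "0 \<le> (1 - sqrt S)\<^sup>2" by simp
    then show "sqrt S \<le> (1 + S) / 2" using S_nn by (simp add: power2_eq_square algebra_simps)
  qed (simp add: B_nn)
  finally have "norm z * (1 + S) \<le> (M + (sqrt N + sqrt B) / 2) * (1 + S)"
    by (simp add: algebra_simps)
  then have "norm z \<le> M + (sqrt N + sqrt B) / 2" using S_nn
    by (simp add: mult_le_cancel_right)
  then show ?thesis unfolding z_def M_def cj_def N_def B_def .
qed

end
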